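(* Let $X\subset\mathbb{R}$ with the Euclidean metric, and let $(X,T_1,\mu_1)$ and $(X,T_2,\mu_2)$ be two probability preserving systems which are both exponentially mixing for $BV$ against $L^\infty$. Let $(r_n)_n$ be a sequence of positive numbers and suppose there is a function $h:\mathbb{N}\to(0,\infty)$ with $h(n)\to\infty$ such that for all $n$ sufficiently large \[ \int \mu_1(B(y,r_n))\,d\mu_2(y) \ge \frac{(\log n)^2 h(n)}{n^2} \] and, for $i=1,2$, \[ \frac{\bigl(\int \mu_i(B(y,r_n))\,d\mu_i(y)\bigr)^{1/2}}{\int \mu_1(B(y,r_n))\,d\mu_2(y)} \le \frac{n}{(\log n)\,h(n)}. \] Then $(\mu_1\times\mu_2)\bigl(\limsup_n E_{n,r_n}^{T_1,T_2}\bigr)=1$.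
   Context: A measure preserving system $(X,T,\mu)$ with $X\subset\mathbb{R}$ is exponentially mixing for $BV$ against $L^\infty$ if there are $C,\theta>0$ such that for all $\psi$ of bounded variation and all $\varphi\in L^\infty(\mu)$ and all $n\ge 0$, $\bigl|\int\psi\cdot\varphi\circ T^n\,d\mu-\int\psi\,d\mu\int\varphi\,d\mu\bigr|\le C\|\psi\|_{BV}\|\varphi\|_{L^\infty}e^{-\theta n}$. For $n\in\mathbb{N}$ and $r>0$, $E_{n,r}^{T_1,T_2}:=\{(x,y)\in X\times X : |T_1^i x- T_2^j y|<r \text{ for some } 0\le i,j<n\}$; $E_{n,r_n}^{T_1,T_2}$ denotes this set with $r=r_n$. $B(y,r)$ is the open ball of radius $r$ about $y$. *)

theory Defs
  imports "HOL-Probability.Probability"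
begin

definition var_on :: "real set \<Rightarrow> (real \<Rightarrow> real) \<Rightarrow> ereal" where
  "var_on X \<psi> = (SUP p \<in> {(k, xs). (\<forall>i\<le>k. xs i \<in> X) \<and> (\<forall>i<k. xs i < xs (Suc i))}.
      ereal (\<Sum>i<fst p. \<bar>\<psi> (snd p (Suc i)) - \<psi> (snd p i)\<bar>))"

definition is_BV_on :: "real set \<Rightarrow> (real \<Rightarrow> real) \<Rightarrow> bool" where
  "is_BV_on X \<psi> \<longleftrightarrow> var_on X \<psi> < \<infinity> \<and> bdd_above ((\<lambda>x. \<bar>\<psi> x\<bar>) ` X)"

definition BV_norm :: "real set \<Rightarrow> (real \<Rightarrow> real) \<Rightarrow> real" where
  "BV_norm X \<psi> = real_of_ereal (var_on X \<psi>) + (SUP x \<in> X. \<bar>\<psi> x\<bar>)"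

definition Linf_norm :: "'a measure \<Rightarrow> ('a \<Rightarrow> real) \<Rightarrow> real" where
  "Linf_norm M \<phi> = real_of_ereal (esssup M (\<lambda>x. ereal \<bar>\<phi> x\<bar>))"

definition exp_mixing_BV_Linf :: "real measure \<Rightarrow> (real \<Rightarrow> real) \<Rightarrow> bool" where
  "exp_mixing_BV_Linf M T \<longleftrightarrow>
     (\<exists>C \<theta>::real. C > 0 \<and> \<theta> > 0 \<and>
       (\<forall>\<psi> \<phi> (n::nat). \<psi> \<in> borel_measurable M \<longrightarrow> is_BV_on (space M) \<psi> \<longrightarrow>
          \<phi> \<in> borel_measurable M \<longrightarrow> esssup M (\<lambda>x. ereal \<bar>\<phi> x\<bar>) < \<infinity> \<longrightarrow>
          \<bar>(\<integral>x. \<psi> x * \<phi> ((T ^^ n) x) \<partial>M) - (\<integral>x. \<psi> x \<partial>M) * (\<integral>x. \<phi> x \<partial>M)\<bar>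
            \<le> C * BV_norm (space M) \<psi> * Linf_norm M \<phi> * exp (- \<theta> * real n)))"

definition E_set :: "real set \<Rightarrow> (real \<Rightarrow> real) \<Rightarrow> (real \<Rightarrow> real) \<Rightarrow> nat \<Rightarrow> real \<Rightarrow> (real \<times> real) set" where
  "E_set X T1 T2 n r = {(x, y). x \<in> X \<and> y \<in> X \<and>
      (\<exists>i<n. \<exists>j<n. \<bar>(T1 ^^ i) x - (T2 ^^ j) y\<bar> < r)}"

end

theory Submission
  imports Defs
begin


lemma funpow_meas: "T \<in> measurable M M \<Longrightarrow> (T^^i) \<in> measurable M M"
  by (induction i) auto

lemma funpow_distr:
  assumes "T \<in> measurable M M" "distr M M T = M"
  shows "distr M M (T^^i) = M"
proof (induction i)
  case 0 thus ?case by (simp add: distr_id2 id_def)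
next
  case (Suc i)
  have "distr M M (T^^Suc i) = distr (distr M M (T^^i)) M T"
    using distr_distr[OF assms(1) funpow_meas[OF assms(1)], of i] by (simp add: comp_def)
  thus ?case using Suc assms by (simp add: o_def)
qed

lemma funpow_integral:
  fixes g :: "'a \<Rightarrow> real"
  assumes "T \<in> measurable M M" "distr M M T = M" "g \<in> borel_measurable M"
  shows "(\<integral>x. g ((T^^i) x) \<partial>M) = (\<integral>x. g x \<partial>M)"
  using integral_distr[OF funpow_meas[OF assms(1)] assms(3), of i] funpow_distr[OF assms(1,2)] by simp

lemma var_le2:
  assumes G: "mono G" and H: "mono H" and G01: "\<And>u. 0 \<le> G u \<and> G u \<le> 1" and H01: "\<And>u. 0 \<le> H u \<and> H u \<le> 1"
  and psi: "\<And>u. \<psi> u = G u - H u"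
  shows "var_on X \<psi> \<le> 2"
  unfolding var_on_def
proof (rule SUP_least, clarsimp)
  fix k and xs :: "nat \<Rightarrow> real"
  assume inc: "\<forall>i<k. xs i < xs (Suc i)"
  have "(\<Sum>i<k. \<bar>\<psi> (xs (Suc i)) - \<psi> (xs i)\<bar>) \<le> (\<Sum>i<k. (G (xs (Suc i)) - G (xs i)) + (H (xs (Suc i)) - H (xs i)))"
  proof (rule sum_mono)
    fix i assume "i \<in> {..<k}"
    hence "xs i \<le> xs (Suc i)" using inc by (simp add: less_imp_le)
    hence "G (xs i) \<le> G (xs (Suc i))" "H (xs i) \<le> H (xs (Suc i))" using G H by (auto simp: mono_def)
    thus "\<bar>\<psi> (xs (Suc i)) - \<psi> (xs i)\<bar> \<le> (G (xs (Suc i)) - G (xs i)) + (H (xs (Suc i)) - H (xs i))"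
      unfolding psi by linarith
  qed
  also have "\<dots> = (G (xs k) - G (xs 0)) + (H (xs k) - H (xs 0))"
    by (simp add: sum.distrib sum_lessThan_telescope[of "\<lambda>i. G (xs i)"] sum_lessThan_telescope[of "\<lambda>i. H (xs i)"])
  also have "\<dots> \<le> 2" using G01[of "xs k"] G01[of "xs 0"] H01[of "xs k"] H01[of "xs 0"] by linarith
  finally show "(\<Sum>i<k. \<bar>\<psi> (xs (Suc i)) - \<psi> (xs i)\<bar>) \<le> 2" .
qed

definition nice :: "real set \<Rightarrow> (real \<Rightarrow> real) \<Rightarrow> bool" where
  "nice X \<psi> \<longleftrightarrow> \<psi> \<in> borel_measurable borel \<and> (\<forall>u. 0 \<le> \<psi> u \<and> \<psi> u \<le> 1) \<and> var_on X \<psi> \<le> 2"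

lemma var_on_nonneg: "X \<noteq> {} \<Longrightarrow> 0 \<le> var_on X \<psi>"
  unfolding var_on_def
  by (rule SUP_upper2[where i="(0, \<lambda>_. SOME x. x \<in> X)"]) (auto simp: some_in_eq)

lemma nice_BV:
  assumes "X \<noteq> {}" "nice X \<psi>"
  shows "is_BV_on X \<psi>" "0 \<le> BV_norm X \<psi>" "BV_norm X \<psi> \<le> 3"
proof -
  have v: "var_on X \<psi> \<le> 2" "\<forall>u. 0 \<le> \<psi> u \<and> \<psi> u \<le> 1" using assms(2) unfolding nice_def by auto
  have bdd: "bdd_above ((\<lambda>x. \<bar>\<psi> x\<bar>) ` X)" using v(2) by (auto intro!: bdd_aboveI[where M=1])
  show "is_BV_on X \<psi>" unfolding is_BV_on_def using v(1) bdd by (auto simp: order_le_less_trans)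
  have r: "0 \<le> real_of_ereal (var_on X \<psi>)" "real_of_ereal (var_on X \<psi>) \<le> 2"
    using v(1) var_on_nonneg[OF assms(1), of \<psi>] by (cases "var_on X \<psi>"; auto)+
  have s: "(SUP x\<in>X. \<bar>\<psi> x\<bar>) \<le> 1" using assms(1) v(2) by (intro cSUP_least) auto
  obtain x0 where "x0 \<in> X" using assms(1) by auto
  have s0: "0 \<le> (SUP x\<in>X. \<bar>\<psi> x\<bar>)" using cSUP_upper[OF \<open>x0 \<in> X\<close> bdd] by linarith
  show "0 \<le> BV_norm X \<psi>" "BV_norm X \<psi> \<le> 3" unfolding BV_norm_def using r s s0 by auto
qed

definition sys :: "real measure \<Rightarrow> (real \<Rightarrow> real) \<Rightarrow> real set \<Rightarrow> bool" where
  "sys M T X \<longleftrightarrow> space M = X \<and> sets M = sets (restrict_space borel X) \<and> prob_space M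
     \<and> T \<in> measurable M M \<and> distr M M T = M"

lemma borel_to_M:
  assumes "sys M T X" "\<psi> \<in> borel_measurable borel"
  shows "\<psi> \<in> borel_measurable M"
proof -
  have "\<psi> \<in> borel_measurable (restrict_space borel X)"
    using assms(2) by (rule measurable_restrict_space1)
  thus ?thesis using assms(1) unfolding sys_def
    by (metis measurable_cong_sets)
qed

lemma sys_nonempty: "sys M T X \<Longrightarrow> X \<noteq> {}"
  unfolding sys_def using prob_space.not_empty by blast

lemma Linf_le1:
  assumes "prob_space M" "\<phi> \<in> borel_measurable M" "\<And>u. \<bar>\<phi> u\<bar> \<le> 1"
  shows "esssup M (\<lambda>x. ereal \<bar>\<phi> x\<bar>) \<le> 1" "Linf_norm M \<phi> \<le> 1"
proof -
  show e: "esssup M (\<lambda>x. ereal \<bar>\<phi> x\<bar>) \<le> 1"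
    using assms by (intro esssup_I) auto
  show "Linf_norm M \<phi> \<le> 1" unfolding Linf_norm_def using e
    by (cases "esssup M (\<lambda>x. ereal \<bar>\<phi> x\<bar>)") auto
qed

definition good :: "real measure \<Rightarrow> (real \<Rightarrow> real) \<Rightarrow> real set \<Rightarrow> real \<Rightarrow> real \<Rightarrow> bool" where
  "good M T X C \<theta> \<longleftrightarrow> sys M T X \<and> C > 0 \<and> \<theta> > 0 \<and>
     (\<forall>\<psi> \<phi> k. nice X \<psi> \<longrightarrow> nice X \<phi> \<longrightarrow>
        \<bar>(\<integral>x. \<psi> x * \<phi> ((T^^k) x) \<partial>M) - (\<integral>x. \<psi> x \<partial>M) * (\<integral>x. \<phi> x \<partial>M)\<bar> \<le> C * exp (- \<theta> * real k))"

lemma mixing_good: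
  assumes "sys M T X" "exp_mixing_BV_Linf M T"
  shows "\<exists>C \<theta>. good M T X C \<theta>"
proof -
  obtain C \<theta> :: real where C: "C > 0" "\<theta> > 0" and mix: "\<And>\<psi> \<phi> (n::nat). \<psi> \<in> borel_measurable M \<Longrightarrow> is_BV_on (space M) \<psi> \<Longrightarrow>
          \<phi> \<in> borel_measurable M \<Longrightarrow> esssup M (\<lambda>x. ereal \<bar>\<phi> x\<bar>) < \<infinity> \<Longrightarrow>
          \<bar>(\<integral>x. \<psi> x * \<phi> ((T ^^ n) x) \<partial>M) - (\<integral>x. \<psi> x \<partial>M) * (\<integral>x. \<phi> x \<partial>M)\<bar>
            \<le> C * BV_norm (space M) \<psi> * Linf_norm M \<phi> * exp (- \<theta> * real n)"
    using assms(2) unfolding exp_mixing_BV_Linf_def by blast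
  have sp: "space M = X" and P: "prob_space M" using assms(1) unfolding sys_def by auto
  have ne: "X \<noteq> {}" using sys_nonempty[OF assms(1)] .
  have "good M T X (3 * C) \<theta>"
    unfolding good_def
  proof (intro conjI allI impI)
    fix \<psi> \<phi> k assume n\<psi>: "nice X \<psi>" and n\<phi>: "nice X \<phi>"
    have m\<psi>: "\<psi> \<in> borel_measurable M" and m\<phi>: "\<phi> \<in> borel_measurable M"
      using n\<psi> n\<phi> borel_to_M[OF assms(1)] unfolding nice_def by auto
    have b\<phi>: "\<And>u. \<bar>\<phi> u\<bar> \<le> 1" using n\<phi> unfolding nice_def by auto
    have L: "esssup M (\<lambda>x. ereal \<bar>\<phi> x\<bar>) \<le> 1" "Linf_norm M \<phi> \<le> 1"
      using Linf_le1[OF P m\<phi> b\<phi>] by auto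
    have BV: "is_BV_on X \<psi>" "0 \<le> BV_norm X \<psi>" "BV_norm X \<psi> \<le> 3" using nice_BV[OF ne n\<psi>] by auto
    have "esssup M (\<lambda>x. ereal \<bar>\<phi> x\<bar>) < \<infinity>" using L(1) by (cases "esssup M (\<lambda>x. ereal \<bar>\<phi> x\<bar>)") auto
    hence "\<bar>(\<integral>x. \<psi> x * \<phi> ((T ^^ k) x) \<partial>M) - (\<integral>x. \<psi> x \<partial>M) * (\<integral>x. \<phi> x \<partial>M)\<bar>
            \<le> C * BV_norm X \<psi> * Linf_norm M \<phi> * exp (- \<theta> * real k)"
      using mix[OF m\<psi> _ m\<phi>] BV(1) sp by auto
    also have "\<dots> \<le> C * 3 * 1 * exp (- \<theta> * real k)"
    proof -
      have "BV_norm X \<psi> * Linf_norm M \<phi> \<le> BV_norm X \<psi> * 1"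
        using BV(2) L(2) by (intro mult_left_mono) auto
      also have "\<dots> \<le> 3" using BV(3) by simp
      finally have "C * (BV_norm X \<psi> * Linf_norm M \<phi>) \<le> C * 3" using C(1) by (intro mult_left_mono) auto
      thus ?thesis by (intro mult_right_mono) (auto simp: mult.assoc)
    qed
    finally show "\<bar>(\<integral>x. \<psi> x * \<phi> ((T ^^ k) x) \<partial>M) - (\<integral>x. \<psi> x \<partial>M) * (\<integral>x. \<phi> x \<partial>M)\<bar>
        \<le> 3 * C * exp (- \<theta> * real k)" by simp
  next
    show "sys M T X" "0 < 3 * C" "0 < \<theta>" using assms(1) C by auto
  qed
  thus ?thesis by blast
qed

lemma good_mono:
  assumes "good M T X C \<theta>" "C \<le> C'" "0 < \<theta>'" "\<theta>' \<le> \<theta>"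
  shows "good M T X C' \<theta>'"
  unfolding good_def
proof (intro conjI allI impI)
  fix \<psi> \<phi> k assume "nice X \<psi>" "nice X \<phi>"
  hence "\<bar>(\<integral>x. \<psi> x * \<phi> ((T^^k) x) \<partial>M) - (\<integral>x. \<psi> x \<partial>M) * (\<integral>x. \<phi> x \<partial>M)\<bar> \<le> C * exp (- \<theta> * real k)"
    using assms(1) unfolding good_def by blast
  also have "\<dots> \<le> C' * exp (- \<theta>' * real k)"
  proof -
    have "C > 0" "\<theta> > 0" using assms(1) unfolding good_def by auto
    hence "exp (- \<theta> * real k) \<le> exp (- \<theta>' * real k)" using assms(4) by (simp add: mult_right_mono)
    thus ?thesis using assms(2) \<open>C > 0\<close> by (intro mult_mono) auto
  qed
  finally show "\<bar>(\<integral>x. \<psi> x * \<phi> ((T^^k) x) \<partial>M) - (\<integral>x. \<psi> x \<partial>M) * (\<integral>x. \<phi> x \<partial>M)\<bar> \<le> C' * exp (- \<theta>' * real k)" .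
next
  show "sys M T X" "0 < C'" "0 < \<theta>'" using assms unfolding good_def by auto
qed

lemma mix_pair1:
  assumes g: "good M T X C \<theta>" and n\<psi>: "nice X \<psi>" and n\<phi>: "nice X \<phi>" and iL: "i + L \<le> i'"
  shows "\<bar>(\<integral>x. \<psi> ((T^^i) x) * \<phi> ((T^^i') x) \<partial>M) - (\<integral>x. \<psi> x \<partial>M) * (\<integral>x. \<phi> x \<partial>M)\<bar> \<le> C * exp (- \<theta> * real L)"
proof -
  have s: "sys M T X" and C: "C > 0" "\<theta> > 0" using g unfolding good_def by auto
  have Tm: "T \<in> measurable M M" and Tp: "distr M M T = M" using s unfolding sys_def by auto
  define k where "k = i' - i"
  have i': "i' = k + i" using iL unfolding k_def by simp
  have m\<psi>: "\<psi> \<in> borel_measurable M" and m\<phi>: "\<phi> \<in> borel_measurable M"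
    using n\<psi> n\<phi> borel_to_M[OF s] unfolding nice_def by auto
  have gm: "(\<lambda>u. \<psi> u * \<phi> ((T^^k) u)) \<in> borel_measurable M"
    using m\<psi> measurable_comp[OF funpow_meas[OF Tm] m\<phi>] by (auto simp: o_def)
  have "(\<integral>x. \<psi> ((T^^i) x) * \<phi> ((T^^i') x) \<partial>M) = (\<integral>x. (\<lambda>u. \<psi> u * \<phi> ((T^^k) u)) ((T^^i) x) \<partial>M)"
    unfolding i' by (simp add: funpow_add)
  also have "\<dots> = (\<integral>x. \<psi> x * \<phi> ((T^^k) x) \<partial>M)"
    by (rule funpow_integral[OF Tm Tp gm])
  finally have eq: "(\<integral>x. \<psi> ((T^^i) x) * \<phi> ((T^^i') x) \<partial>M) = (\<integral>x. \<psi> x * \<phi> ((T^^k) x) \<partial>M)" .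
  have "\<bar>(\<integral>x. \<psi> x * \<phi> ((T^^k) x) \<partial>M) - (\<integral>x. \<psi> x \<partial>M) * (\<integral>x. \<phi> x \<partial>M)\<bar> \<le> C * exp (- \<theta> * real k)"
    using g n\<psi> n\<phi> unfolding good_def by blast
  also have "\<dots> \<le> C * exp (- \<theta> * real L)"
    using C iL unfolding k_def by (auto intro!: mult_left_mono)
  finally show ?thesis unfolding eq .
qed

lemma mix_pair:
  assumes g: "good M T X C \<theta>" and n\<psi>: "nice X \<psi>" and n\<phi>: "nice X \<phi>" and iL: "i + L \<le> i' \<or> i' + L \<le> i"
  shows "\<bar>(\<integral>x. \<psi> ((T^^i) x) * \<phi> ((T^^i') x) \<partial>M) - (\<integral>x. \<psi> x \<partial>M) * (\<integral>x. \<phi> x \<partial>M)\<bar> \<le> C * exp (- \<theta> * real L)"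
  using iL
proof
  assume "i + L \<le> i'" thus ?thesis using mix_pair1[OF g n\<psi> n\<phi>] by blast
next
  assume "i' + L \<le> i"
  from mix_pair1[OF g n\<phi> n\<psi> this] show ?thesis by (simp add: mult.commute)
qed



lemma bint:
  fixes f :: "'a \<Rightarrow> real"
  assumes "prob_space M" "f \<in> borel_measurable M" "\<And>x. x \<in> space M \<Longrightarrow> \<bar>f x\<bar> \<le> B"
  shows "integrable M f"
proof -
  interpret prob_space M by fact
  show ?thesis using assms(2,3) by (intro integrable_const_bound[where B=B]) auto
qed

lemma id_M: "sys M T X \<Longrightarrow> (\<lambda>x. x) \<in> borel_measurable M"
  using borel_to_M[of M T X "\<lambda>x. x"] by simp

lemma ball_sets: "sys M T X \<Longrightarrow> ball a r \<inter> space M \<in> sets M"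
proof -
  assume s: "sys M T X"
  note idm[measurable] = id_M[OF s]
  have "{x \<in> space M. dist a x < r} \<in> sets M" by measurable
  moreover have "ball a r \<inter> space M = {x \<in> space M. dist a x < r}" by (auto simp: ball_def)
  ultimately show ?thesis by simp
qed

lemma nice_ind:
  assumes "r > 0"
  shows "nice X (indicator (ball a r))"
proof -
  define G where "G u = (if a - r < u then 1 else 0::real)" for u
  define H where "H u = (if a + r \<le> u then 1 else 0::real)" for u
  have eq: "indicator (ball a r) u = G u - H u" for u
    using assms by (auto simp: G_def H_def indicator_def ball_def dist_real_def)
  have "var_on X (indicator (ball a r)) \<le> 2"
    by (rule var_le2[where G=G and H=H]) (auto simp: mono_def G_def H_def eq)
  moreover have "indicator (ball a r) \<in> borel_measurable (borel :: real measure)"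
    by (intro borel_measurable_indicator) auto
  ultimately show ?thesis unfolding nice_def by (auto simp: indicator_def)
qed

lemma nice_p:
  assumes s: "sys M T X" and r: "r > 0"
  shows "nice X (\<lambda>a. measure M (ball a r \<inter> space M))"
proof -
  note idm[measurable] = id_M[OF s]
  interpret prob_space M using s unfolding sys_def by auto
  define G where "G a = 1 - measure M {x \<in> space M. a + r \<le> x}" for a
  define H where "H a = 1 - measure M {x \<in> space M. a - r < x}" for a
  have mG: "mono G" unfolding mono_def G_def
    by (auto intro!: finite_measure_mono)
  have mH: "mono H" unfolding mono_def H_def
    by (auto intro!: finite_measure_mono)
  have G01: "0 \<le> G u \<and> G u \<le> 1" for u unfolding G_def by auto
  have H01: "0 \<le> H u \<and> H u \<le> 1" for u unfolding H_def by auto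
  have eq: "measure M (ball a r \<inter> space M) = G a - H a" for a
  proof -
    have "ball a r \<inter> space M = {x \<in> space M. a - r < x} - {x \<in> space M. a + r \<le> x}"
      by (auto simp: ball_def dist_real_def)
    moreover have "{x \<in> space M. a + r \<le> x} \<subseteq> {x \<in> space M. a - r < x}" using r by auto
    ultimately have "measure M (ball a r \<inter> space M) = measure M {x \<in> space M. a - r < x} - measure M {x \<in> space M. a + r \<le> x}"
      by (simp add: finite_measure_Diff)
    thus ?thesis unfolding G_def H_def by simp
  qed
  have v: "var_on X (\<lambda>a. measure M (ball a r \<inter> space M)) \<le> 2"
    by (rule var_le2[OF mG mH G01 H01 eq])
  have "(\<lambda>a. G a - H a) \<in> borel_measurable borel"
    using borel_measurable_mono[OF mG] borel_measurable_mono[OF mH] by measurable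
  hence "(\<lambda>a. measure M (ball a r \<inter> space M)) \<in> borel_measurable borel" unfolding eq .
  thus ?thesis using v unfolding nice_def by auto
qed



lemma p_meas: "sys M T X \<Longrightarrow> r > 0 \<Longrightarrow> (\<lambda>a. measure M (ball a r \<inter> space M)) \<in> borel_measurable borel"
  using nice_p unfolding nice_def by blast

lemma sq_bound:
  assumes s: "sys M T X" and r: "r > 0" and H: "H \<in> sets M" and diam: "\<And>u v. u \<in> H \<Longrightarrow> v \<in> H \<Longrightarrow> \<bar>u - v\<bar> < r"
  shows "(measure M H)^2 \<le> (\<integral>y. measure M (ball y r \<inter> space M) \<partial>M)"
proof -
  interpret prob_space M using s unfolding sys_def by auto
  let ?p = "\<lambda>y. measure M (ball y r \<inter> space M)"
  have pm: "?p \<in> borel_measurable M" using borel_to_M[OF s p_meas[OF s r]] .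
  have Hsub: "H \<subseteq> space M" using sets.sets_into_space[OF H] .
  have ip: "integrable M ?p" by (rule bint[where B=1]) (auto intro: pm simp: prob_space_axioms)
  have iH: "integrable M (\<lambda>y. indicator H y * ?p y)"
    by (rule bint[where B=1]) (use pm H in \<open>auto simp: prob_space_axioms indicator_def\<close>)
  have iH2: "integrable M (\<lambda>y. indicator H y * measure M H)"
    by (rule bint[where B=1]) (use H in \<open>auto simp: prob_space_axioms indicator_def\<close>)
  have "(measure M H)^2 = (\<integral>y. indicator H y * measure M H \<partial>M)"
    using Hsub by (simp add: power2_eq_square Int_absorb2)
  also have "\<dots> \<le> (\<integral>y. indicator H y * ?p y \<partial>M)"
  proof (rule integral_mono[OF iH2 iH])
    fix y assume "y \<in> space M"
    show "indicator H y * measure M H \<le> indicator H y * ?p y"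
    proof (cases "y \<in> H")
      case True
      have "H \<subseteq> ball y r \<inter> space M" using diam[OF True] Hsub by (auto simp: ball_def dist_real_def)
      hence "measure M H \<le> ?p y" using ball_sets[OF s] by (intro finite_measure_mono) auto
      thus ?thesis using True by simp
    qed simp
  qed
  also have "\<dots> \<le> (\<integral>y. ?p y \<partial>M)"
    by (rule integral_mono[OF iH ip]) (auto simp: indicator_def)
  finally show ?thesis .
qed

lemma p_sup:
  assumes s: "sys M T X" and r: "r > 0"
  shows "measure M (ball a r \<inter> space M) \<le> 2 * sqrt (\<integral>y. measure M (ball y r \<inter> space M) \<partial>M)"
proof -
  interpret prob_space M using s unfolding sys_def by auto
  note idm[measurable] = id_M[OF s]
  let ?c = "(\<integral>y. measure M (ball y r \<inter> space M) \<partial>M)"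
  define H1 where "H1 = {x \<in> space M. a - r \<le> x \<and> x < a}"
  define H2 where "H2 = {x \<in> space M. a \<le> x \<and> x < a + r}"
  have H1s: "H1 \<in> sets M" unfolding H1_def by measurable
  have H2s: "H2 \<in> sets M" unfolding H2_def by measurable
  have b1: "measure M H1 \<le> sqrt ?c"
  proof -
    have "(measure M H1)^2 \<le> ?c" by (rule sq_bound[OF s r H1s]) (auto simp: H1_def)
    thus ?thesis by (simp add: real_le_rsqrt)
  qed
  have b2: "measure M H2 \<le> sqrt ?c"
  proof -
    have "(measure M H2)^2 \<le> ?c" by (rule sq_bound[OF s r H2s]) (auto simp: H2_def)
    thus ?thesis by (simp add: real_le_rsqrt)
  qed
  have "ball a r \<inter> space M \<subseteq> H1 \<union> H2" by (auto simp: H1_def H2_def ball_def dist_real_def)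
  hence "measure M (ball a r \<inter> space M) \<le> measure M (H1 \<union> H2)"
    using H1s H2s by (intro finite_measure_mono) auto
  also have "\<dots> \<le> measure M H1 + measure M H2" using H1s H2s by (intro measure_subadditive) auto
  finally show ?thesis using b1 b2 by linarith
qed



definition Fd :: "(real \<Rightarrow> real) \<Rightarrow> (real \<Rightarrow> real) \<Rightarrow> real \<Rightarrow> nat \<Rightarrow> nat \<Rightarrow> real \<times> real \<Rightarrow> real" where
  "Fd T S r i j z = indicator (ball ((S^^j) (snd z)) r) ((T^^i) (fst z))"

lemma Fd_swap: "Fd S T r j i (y, x) = Fd T S r i j (x, y)"
  by (simp add: Fd_def indicator_def ball_def dist_commute)

lemma Fd_01: "0 \<le> Fd T S r i j z" "Fd T S r i j z \<le> 1"
  by (auto simp: Fd_def indicator_def)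

lemma Fd_sq: "Fd T S r i j z * Fd T S r i j z = Fd T S r i j z"
  by (auto simp: Fd_def indicator_def)

lemma funpow_borel:
  assumes "sys M T X" shows "(\<lambda>x. (T^^i) x) \<in> borel_measurable M"
proof -
  have "T \<in> measurable M M" using assms unfolding sys_def by auto
  from measurable_comp[OF funpow_meas[OF this] id_M[OF assms]] show ?thesis by (simp add: o_def)
qed

locale two =
  fixes M N :: "real measure" and T S :: "real \<Rightarrow> real" and X :: "real set" and C \<theta> r :: real
  assumes gM: "good M T X C \<theta>" and gN: "good N S X C \<theta>" and r: "r > 0"
begin

lemma sM: "sys M T X" and sN: "sys N S X" using gM gN unfolding good_def by auto

lemma PM: "prob_space M" and PN: "prob_space N" using sM sN unfolding sys_def by auto

lemma PP: "pair_prob_space M N"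
  unfolding pair_prob_space_def pair_sigma_finite_def
  using PM PN by (auto intro: prob_space_imp_sigma_finite)

lemma measF: "Fd T S r i j \<in> borel_measurable (M \<Otimes>\<^sub>M N)"
proof -
  note [measurable] = funpow_borel[OF sM] funpow_borel[OF sN]
  have "(\<lambda>z. if dist ((S^^j) (snd z)) ((T^^i) (fst z)) < r then 1 else 0 :: real) \<in> borel_measurable (M \<Otimes>\<^sub>M N)"
    by measurable
  moreover have "Fd T S r i j = (\<lambda>z. if dist ((S^^j) (snd z)) ((T^^i) (fst z)) < r then 1 else 0 :: real)"
    by (auto simp: Fd_def indicator_def ball_def fun_eq_iff)
  ultimately show ?thesis by simp
qed

lemma intF: "integrable (M \<Otimes>\<^sub>M N) (Fd T S r i j)"
  by (rule bint[where B=1]) (auto intro!: measF prob_space_pair PM PN simp: Fd_def indicator_def)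

lemma intG: "integrable (M \<Otimes>\<^sub>M N) (\<lambda>z. Fd T S r i j z * Fd T S r i' j' z)"
proof -
  have "(\<lambda>z. Fd T S r i j z * Fd T S r i' j' z) \<in> borel_measurable (M \<Otimes>\<^sub>M N)"
    by (rule borel_measurable_times[OF measF measF])
  thus ?thesis by (rule bint[where B=1, rotated]) (auto intro!: prob_space_pair PM PN simp: Fd_def indicator_def)
qed

lemma Cpos: "C > 0" "\<theta> > 0" using gM unfolding good_def by auto

abbreviation pM where "pM a \<equiv> measure M (ball a r \<inter> space M)"

lemma pM01: "0 \<le> pM a" "pM a \<le> 1"
  using PM by (auto simp: prob_space.prob_le_1)

lemma pM_meas: "(\<lambda>a. pM a) \<in> borel_measurable N"
  using borel_to_M[OF sN p_meas[OF sM r]] .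

lemma inner1: "(\<integral>x. Fd T S r i j (x, y) \<partial>M) = pM ((S^^j) y)"
proof -
  have Tm: "T \<in> measurable M M" and Tp: "distr M M T = M" using sM unfolding sys_def by auto
  have im: "indicator (ball ((S^^j) y) r) \<in> borel_measurable M"
    by (rule borel_to_M[OF sM]) (auto intro!: borel_measurable_indicator)
  have "(\<integral>x. Fd T S r i j (x, y) \<partial>M) = (\<integral>x. indicator (ball ((S^^j) y) r) ((T^^i) x) \<partial>M)"
    by (simp add: Fd_def)
  also have "\<dots> = (\<integral>x. indicator (ball ((S^^j) y) r) x \<partial>M)"
    by (rule funpow_integral[OF Tm Tp im])
  finally show ?thesis by simp
qed

lemma EF: "integral\<^sup>L (M \<Otimes>\<^sub>M N) (Fd T S r i j) = (\<integral>y. pM y \<partial>N)"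
proof -
  interpret pair_prob_space M N by (rule PP)
  have Sm: "S \<in> measurable N N" and Sp: "distr N N S = N" using sN unfolding sys_def by auto
  have ic: "integrable (M \<Otimes>\<^sub>M N) (case_prod (\<lambda>x y. Fd T S r i j (x, y)))"
    using intF by (simp add: case_prod_beta')
  have "integral\<^sup>L (M \<Otimes>\<^sub>M N) (Fd T S r i j) = (\<integral>y. (\<integral>x. Fd T S r i j (x, y) \<partial>M) \<partial>N)"
    using integral_snd[OF ic] by (simp add: case_prod_beta')
  also have "\<dots> = (\<integral>y. pM ((S^^j) y) \<partial>N)" by (simp add: inner1)
  also have "\<dots> = (\<integral>y. pM y \<partial>N)" by (rule funpow_integral[OF Sm Sp pM_meas])
  finally show ?thesis .
qed

lemma Q_le_m: "integral\<^sup>L (M \<Otimes>\<^sub>M N) (\<lambda>z. Fd T S r i j z * Fd T S r i' j' z) \<le> (\<integral>y. pM y \<partial>N)"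
proof -
  have "integral\<^sup>L (M \<Otimes>\<^sub>M N) (\<lambda>z. Fd T S r i j z * Fd T S r i' j' z) \<le> integral\<^sup>L (M \<Otimes>\<^sub>M N) (Fd T S r i j)"
  proof (rule integral_mono[OF intG intF])
    fix z show "Fd T S r i j z * Fd T S r i' j' z \<le> Fd T S r i j z"
      using Fd_01[of T S r i j z] Fd_01[of T S r i' j' z] by (simp add: mult_left_le)
  qed
  thus ?thesis using EF by simp
qed

lemma inner_far:
  assumes far: "i + L \<le> i' \<or> i' + L \<le> i"
  shows "(\<integral>x. Fd T S r i j (x, y) * Fd T S r i' j' (x, y) \<partial>M) \<le> pM ((S^^j) y) * pM ((S^^j') y) + C * exp (- \<theta> * real L)"
proof -
  have "\<bar>(\<integral>x. indicator (ball ((S^^j) y) r) ((T^^i) x) * indicator (ball ((S^^j') y) r) ((T^^i') x) \<partial>M)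
     - (\<integral>x. indicator (ball ((S^^j) y) r) x \<partial>M) * (\<integral>x. indicator (ball ((S^^j') y) r) x \<partial>M)\<bar> \<le> C * exp (- \<theta> * real L)"
    by (rule mix_pair[OF gM nice_ind[OF r] nice_ind[OF r] far])
  thus ?thesis by (simp add: Fd_def)
qed

lemma Q_inner:
  assumes far: "i + L \<le> i' \<or> i' + L \<le> i"
  shows "integral\<^sup>L (M \<Otimes>\<^sub>M N) (\<lambda>z. Fd T S r i j z * Fd T S r i' j' z)
     \<le> (\<integral>y. pM ((S^^j) y) * pM ((S^^j') y) \<partial>N) + C * exp (- \<theta> * real L)"
proof -
  interpret pair_prob_space M N by (rule PP)
  have ic: "integrable (M \<Otimes>\<^sub>M N) (case_prod (\<lambda>x y. Fd T S r i j (x, y) * Fd T S r i' j' (x, y)))"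
    using intG by (simp add: case_prod_beta')
  have pm: "(\<lambda>y. pM ((S^^k) y)) \<in> borel_measurable N" for k
    using measurable_comp[OF funpow_borel[OF sN] p_meas[OF sM r]] by (simp add: o_def)
  have ipp: "integrable N (\<lambda>y. pM ((S^^j) y) * pM ((S^^j') y) + C * exp (- \<theta> * real L))"
  proof (rule bint[where B="1 + C * exp (- \<theta> * real L)"])
    show "prob_space N" by (rule PN)
    show "(\<lambda>y. pM ((S^^j) y) * pM ((S^^j') y) + C * exp (- \<theta> * real L)) \<in> borel_measurable N"
      using pm by measurable
    fix y
    have "0 \<le> pM ((S^^j) y) * pM ((S^^j') y)" "pM ((S^^j) y) * pM ((S^^j') y) \<le> 1"
      using pM01 by (auto intro: mult_le_one)
    moreover have "0 < C * exp (- \<theta> * real L)" using Cpos by simp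
    ultimately show "\<bar>pM ((S^^j) y) * pM ((S^^j') y) + C * exp (- \<theta> * real L)\<bar> \<le> 1 + C * exp (- \<theta> * real L)"
      by linarith
  qed
  have "integral\<^sup>L (M \<Otimes>\<^sub>M N) (\<lambda>z. Fd T S r i j z * Fd T S r i' j' z) = (\<integral>y. (\<integral>x. Fd T S r i j (x, y) * Fd T S r i' j' (x, y) \<partial>M) \<partial>N)"
    using integral_snd[OF ic] by (simp add: case_prod_beta')
  also have "\<dots> \<le> (\<integral>y. pM ((S^^j) y) * pM ((S^^j') y) + C * exp (- \<theta> * real L) \<partial>N)"
    by (rule integral_mono[OF integrable_snd[OF ic] ipp]) (rule inner_far[OF far])
  also have "\<dots> = (\<integral>y. pM ((S^^j) y) * pM ((S^^j') y) \<partial>N) + C * exp (- \<theta> * real L)"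
  proof -
    have "integrable N (\<lambda>y. pM ((S^^j) y) * pM ((S^^j') y))"
      by (rule bint[where B=1]) (use pm PN pM01 in \<open>auto intro!: mult_le_one simp: abs_mult\<close>)
    thus ?thesis using PN by (simp add: prob_space.prob_space)
  qed
  finally show ?thesis .
qed

end



definition cl :: "nat \<Rightarrow> nat \<Rightarrow> nat \<Rightarrow> real" where
  "cl L a b = (if a + L \<le> b \<or> b + L \<le> a then 0 else 1)"

context two begin

lemma m_nonneg: "0 \<le> (\<integral>y. pM y \<partial>N)"
  using pM01 by (intro integral_nonneg_AE) auto

lemma Q_far1:
  assumes far: "i + L \<le> i' \<or> i' + L \<le> i"
  shows "integral\<^sup>L (M \<Otimes>\<^sub>M N) (\<lambda>z. Fd T S r i j z * Fd T S r i' j' z)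
     \<le> 2 * sqrt (\<integral>y. pM y \<partial>M) * (\<integral>y. pM y \<partial>N) + C * exp (- \<theta> * real L)"
proof -
  let ?s = "2 * sqrt (\<integral>y. pM y \<partial>M)"
  have Sm: "S \<in> measurable N N" and Sp: "distr N N S = N" using sN unfolding sys_def by auto
  have pm: "(\<lambda>y. pM ((S^^k) y)) \<in> borel_measurable N" for k
    using measurable_comp[OF funpow_borel[OF sN] p_meas[OF sM r]] by (simp add: o_def)
  have i1: "integrable N (\<lambda>y. pM ((S^^j) y) * pM ((S^^j') y))"
    by (rule bint[where B=1]) (use pm PN pM01 in \<open>auto intro!: mult_le_one simp: abs_mult\<close>)
  have s0: "0 \<le> ?s" by simp
  have i2: "integrable N (\<lambda>y. pM ((S^^j) y) * ?s)"
  proof (rule bint[where B="?s"])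
    show "prob_space N" by (rule PN)
    show "(\<lambda>y. pM ((S^^j) y) * ?s) \<in> borel_measurable N" using pm by measurable
    fix y
    have "pM ((S^^j) y) * ?s \<le> ?s" using pM01 s0 by (intro mult_left_le_one_le) auto
    moreover have "0 \<le> pM ((S^^j) y) * ?s" using pM01 s0 by simp
    ultimately show "\<bar>pM ((S^^j) y) * ?s\<bar> \<le> ?s" by simp
  qed
  have "(\<integral>y. pM ((S^^j) y) * pM ((S^^j') y) \<partial>N) \<le> (\<integral>y. pM ((S^^j) y) * ?s \<partial>N)"
    by (rule integral_mono[OF i1 i2]) (use p_sup[OF sM r] pM01 in \<open>auto intro!: mult_left_mono\<close>)
  also have "\<dots> = (\<integral>y. pM ((S^^j) y) \<partial>N) * ?s" by simp
  also have "(\<integral>y. pM ((S^^j) y) \<partial>N) = (\<integral>y. pM y \<partial>N)" by (rule funpow_integral[OF Sm Sp pM_meas])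
  finally show ?thesis using Q_inner[OF far, of j j'] by (simp add: mult.commute)
qed

lemma Q_far2:
  assumes fari: "i + L \<le> i' \<or> i' + L \<le> i" and farj: "j + L \<le> j' \<or> j' + L \<le> j"
  shows "integral\<^sup>L (M \<Otimes>\<^sub>M N) (\<lambda>z. Fd T S r i j z * Fd T S r i' j' z)
     \<le> (\<integral>y. pM y \<partial>N)^2 + 2 * (C * exp (- \<theta> * real L))"
proof -
  have "\<bar>(\<integral>y. pM ((S^^j) y) * pM ((S^^j') y) \<partial>N) - (\<integral>y. pM y \<partial>N) * (\<integral>y. pM y \<partial>N)\<bar> \<le> C * exp (- \<theta> * real L)"
    by (rule mix_pair[OF gN nice_p[OF sM r] nice_p[OF sM r] farj])
  thus ?thesis using Q_inner[OF fari, of j j'] by (simp add: power2_eq_square)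
qed

lemma swap_two: "two N M S T X C \<theta> r"
  using gM gN r by (simp add: two_def)

lemma swapQ: "integral\<^sup>L (M \<Otimes>\<^sub>M N) (\<lambda>z. Fd T S r i j z * Fd T S r i' j' z)
   = integral\<^sup>L (N \<Otimes>\<^sub>M M) (\<lambda>z. Fd S T r j i z * Fd S T r j' i' z)"
proof -
  interpret sw: two N M S T X C \<theta> r by (rule swap_two)
  interpret pp: pair_prob_space N M using sw.PP .
  have "(\<integral>(x,y). (\<lambda>z. Fd S T r j i z * Fd S T r j' i' z) (y,x) \<partial>(M \<Otimes>\<^sub>M N)) = integral\<^sup>L (N \<Otimes>\<^sub>M M) (\<lambda>z. Fd S T r j i z * Fd S T r j' i' z)"
    by (rule pp.integral_product_swap) (rule borel_measurable_times[OF sw.measF sw.measF])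
  moreover have "(\<lambda>(x,y). (\<lambda>z. Fd S T r j i z * Fd S T r j' i' z) (y,x)) = (\<lambda>z. Fd T S r i j z * Fd T S r i' j' z)"
    by (auto simp: Fd_swap fun_eq_iff)
  ultimately show ?thesis by simp
qed

lemma swap_m: "(\<integral>y. pM y \<partial>N) = (\<integral>x. measure N (ball x r \<inter> space N) \<partial>M)"
proof -
  interpret sw: two N M S T X C \<theta> r by (rule swap_two)
  have "(\<integral>y. pM y \<partial>N) = integral\<^sup>L (M \<Otimes>\<^sub>M N) (\<lambda>z. Fd T S r 0 0 z * Fd T S r 0 0 z)"
    using EF[of 0 0] by (simp add: Fd_sq)
  also have "\<dots> = integral\<^sup>L (N \<Otimes>\<^sub>M M) (\<lambda>z. Fd S T r 0 0 z * Fd S T r 0 0 z)" by (rule swapQ)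
  also have "\<dots> = (\<integral>x. measure N (ball x r \<inter> space N) \<partial>M)" using sw.EF[of 0 0] by (simp add: Fd_sq)
  finally show ?thesis .
qed


lemma Qbound:
  "integral\<^sup>L (M \<Otimes>\<^sub>M N) (\<lambda>z. Fd T S r i j z * Fd T S r i' j' z)
     \<le> (\<integral>y. pM y \<partial>N)^2 + 2 * (C * exp (- \<theta> * real L))
       + cl L i i' * (2 * sqrt (\<integral>y. measure N (ball y r \<inter> space N) \<partial>N) * (\<integral>y. pM y \<partial>N))
       + cl L j j' * (2 * sqrt (\<integral>y. pM y \<partial>M) * (\<integral>y. pM y \<partial>N))
       + cl L i i' * cl L j j' * (\<integral>y. pM y \<partial>N)"
proof -
  interpret sw: two N M S T X C \<theta> r by (rule swap_two)
  let ?m = "(\<integral>y. pM y \<partial>N)"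
  let ?e = "C * exp (- \<theta> * real L)"
  let ?Q = "integral\<^sup>L (M \<Otimes>\<^sub>M N) (\<lambda>z. Fd T S r i j z * Fd T S r i' j' z)"
  have m0: "0 \<le> ?m" by (rule m_nonneg)
  have e0: "0 \<le> ?e" using Cpos by simp
  have s1: "0 \<le> 2 * sqrt (\<integral>y. measure N (ball y r \<inter> space N) \<partial>N) * ?m" using m0 by simp
  have s2: "0 \<le> 2 * sqrt (\<integral>y. pM y \<partial>M) * ?m" using m0 by simp
  have c01: "0 \<le> cl L a b" "cl L a b \<le> 1" for a b by (auto simp: cl_def)
  have m2: "0 \<le> ?m^2" by simp
  let ?R = "(\<integral>y. pM y \<partial>N)^2 + 2 * (C * exp (- \<theta> * real L))
       + cl L i i' * (2 * sqrt (\<integral>y. measure N (ball y r \<inter> space N) \<partial>N) * (\<integral>y. pM y \<partial>N))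
       + cl L j j' * (2 * sqrt (\<integral>y. pM y \<partial>M) * (\<integral>y. pM y \<partial>N))
       + cl L i i' * cl L j j' * (\<integral>y. pM y \<partial>N)"
  show "?Q \<le> ?R"
  proof (cases "i + L \<le> i' \<or> i' + L \<le> i")
    case fi: True
    hence ci: "cl L i i' = 0" by (simp add: cl_def)
    show ?thesis
    proof (cases "j + L \<le> j' \<or> j' + L \<le> j")
      case True
      hence "cl L j j' = 0" by (simp add: cl_def)
      hence "?R = ?m^2 + 2 * ?e" using ci by simp
      with Q_far2[OF fi True] show ?thesis by simp
    next
      case False
      hence "cl L j j' = 1" by (simp add: cl_def)
      hence "?R = ?m^2 + 2 * ?e + 2 * sqrt (\<integral>y. pM y \<partial>M) * ?m" using ci by simp
      with Q_far1[OF fi, of j j'] e0 m2 show ?thesis by linarith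
    qed
  next
    case False
    hence ci: "cl L i i' = 1" by (simp add: cl_def)
    show ?thesis
    proof (cases "j + L \<le> j' \<or> j' + L \<le> j")
      case True
      hence cj: "cl L j j' = 0" by (simp add: cl_def)
      have "?Q = integral\<^sup>L (N \<Otimes>\<^sub>M M) (\<lambda>z. Fd S T r j i z * Fd S T r j' i' z)" by (rule swapQ)
      also have "\<dots> \<le> 2 * sqrt (\<integral>y. measure N (ball y r \<inter> space N) \<partial>N) * (\<integral>y. measure N (ball y r \<inter> space N) \<partial>M) + ?e"
        by (rule sw.Q_far1[OF True])
      finally have "?Q \<le> 2 * sqrt (\<integral>y. measure N (ball y r \<inter> space N) \<partial>N) * ?m + ?e" using swap_m by simp
      moreover have "?R = ?m^2 + 2 * ?e + 2 * sqrt (\<integral>y. measure N (ball y r \<inter> space N) \<partial>N) * ?m" using ci cj by simp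
      ultimately show ?thesis using e0 m2 by linarith
    next
      case False
      hence cj: "cl L j j' = 1" by (simp add: cl_def)
      have "?R = ?m^2 + 2 * ?e + 2 * sqrt (\<integral>y. measure N (ball y r \<inter> space N) \<partial>N) * ?m
          + 2 * sqrt (\<integral>y. pM y \<partial>M) * ?m + ?m" using ci cj by simp
      with Q_le_m[of i j i' j'] e0 m2 s1 s2 show ?thesis by linarith
    qed
  qed
qed

end



lemma cl_count: "(\<Sum>i<n. \<Sum>i'<n. cl L i i') \<le> real n * (2 * real L)"
proof -
  have "(\<Sum>i'<n. cl L i i') \<le> 2 * real L" for i
  proof -
    have "(\<Sum>i'<n. cl L i i') = (\<Sum>i'\<in>{i'\<in>{..<n}. i' < i + L \<and> i < i' + L}. 1)"
      by (rule sum.mono_neutral_cong_right) (auto simp: cl_def)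
    also have "\<dots> = real (card {i'\<in>{..<n}. i' < i + L \<and> i < i' + L})" by simp
    also have "card {i'\<in>{..<n}. i' < i + L \<and> i < i' + L} \<le> card {i - L..<i + L}"
      by (rule card_mono) auto
    hence "real (card {i'\<in>{..<n}. i' < i + L \<and> i < i' + L}) \<le> 2 * real L" by simp
    finally show ?thesis .
  qed
  hence "(\<Sum>i<n. \<Sum>i'<n. cl L i i') \<le> (\<Sum>i<n. 2 * real L)" by (intro sum_mono) auto
  thus ?thesis by simp
qed

lemma cl_nonneg: "0 \<le> cl L a b" by (simp add: cl_def)

context two begin

definition Z :: "nat \<Rightarrow> real \<times> real \<Rightarrow> real" where
  "Z n z = (\<Sum>i<n. \<Sum>j<n. Fd T S r i j z)"

lemma Z_meas: "Z n \<in> borel_measurable (M \<Otimes>\<^sub>M N)"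
  unfolding Z_def using measF by measurable

lemma Z_sq: "Z n z * Z n z = (\<Sum>i<n. \<Sum>i'<n. \<Sum>j<n. \<Sum>j'<n. Fd T S r i j z * Fd T S r i' j' z)"
  unfolding Z_def sum_product by simp

lemma EZ: "integral\<^sup>L (M \<Otimes>\<^sub>M N) (Z n) = real n ^ 2 * (\<integral>y. pM y \<partial>N)"
proof -
  have "integral\<^sup>L (M \<Otimes>\<^sub>M N) (Z n) = (\<Sum>i<n. \<Sum>j<n. integral\<^sup>L (M \<Otimes>\<^sub>M N) (Fd T S r i j))"
    unfolding Z_def by (simp add: integral_sum integrable_sum intF)
  also have "\<dots> = real n ^ 2 * (\<integral>y. pM y \<partial>N)" by (simp add: EF power2_eq_square)
  finally show ?thesis .
qed

lemma EZ2: "integral\<^sup>L (M \<Otimes>\<^sub>M N) (\<lambda>z. Z n z * Z n z) = (\<Sum>i<n. \<Sum>i'<n. \<Sum>j<n. \<Sum>j'<n.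
     integral\<^sup>L (M \<Otimes>\<^sub>M N) (\<lambda>z. Fd T S r i j z * Fd T S r i' j' z))"
  unfolding Z_sq by (simp add: integral_sum integrable_sum intG)

lemma EZ2_bound:
  fixes L :: nat
  defines "m \<equiv> (\<integral>y. pM y \<partial>N)"
  defines "A \<equiv> 2 * sqrt (\<integral>y. measure N (ball y r \<inter> space N) \<partial>N) * m"
  defines "B \<equiv> 2 * sqrt (\<integral>y. pM y \<partial>M) * m"
  defines "e \<equiv> C * exp (- \<theta> * real L)"
  shows "integral\<^sup>L (M \<Otimes>\<^sub>M N) (\<lambda>z. Z n z * Z n z)
     \<le> real n ^ 4 * (m^2 + 2 * e) + real n ^ 3 * (2 * real L) * (A + B) + (real n * (2 * real L))^2 * m"
proof -
  define K where "K = (\<Sum>i<n. \<Sum>i'<n. cl L i i')"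
  have K0: "0 \<le> K" unfolding K_def by (intro sum_nonneg) (auto simp: cl_nonneg)
  have K1: "K \<le> real n * (2 * real L)" unfolding K_def by (rule cl_count)
  have m0: "0 \<le> m" unfolding m_def by (rule m_nonneg)
  have A0: "0 \<le> A" "0 \<le> B" unfolding A_def B_def using m0 by auto
  have "integral\<^sup>L (M \<Otimes>\<^sub>M N) (\<lambda>z. Z n z * Z n z) \<le> (\<Sum>i<n. \<Sum>i'<n. \<Sum>j<n. \<Sum>j'<n.
     (m^2 + 2 * e) + cl L i i' * A + cl L j j' * B + cl L i i' * cl L j j' * m)"
    unfolding EZ2 m_def A_def B_def e_def by (intro sum_mono Qbound)
  also have "\<dots> = real n ^ 4 * (m^2 + 2 * e) + real n^2 * K * A + real n^2 * K * B + K * K * m"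
    by (simp add: sum.distrib sum_distrib_left[symmetric] sum_distrib_right[symmetric] K_def
        power4_eq_xxxx power2_eq_square algebra_simps)
  also have "\<dots> \<le> real n ^ 4 * (m^2 + 2 * e) + real n^2 * (real n * (2 * real L)) * A + real n^2 * (real n * (2 * real L)) * B
      + (real n * (2 * real L)) * (real n * (2 * real L)) * m"
    using K0 K1 A0 m0 by (intro add_mono mult_right_mono mult_left_mono mult_mono) auto
  also have "\<dots> = real n ^ 4 * (m^2 + 2 * e) + real n ^ 3 * (2 * real L) * (A + B) + (real n * (2 * real L))^2 * m"
    by (simp add: power2_eq_square power3_eq_cube algebra_simps)
  finally show ?thesis .
qed

end



context two begin

lemma spX: "space M = X" "space N = X" using sM sN unfolding sys_def by auto

lemma Fd_pos: "0 < Fd T S r i j (x, y) \<longleftrightarrow> \<bar>(T^^i) x - (S^^j) y\<bar> < r"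
  by (simp add: Fd_def indicator_def ball_def dist_real_def abs_minus_commute)

lemma Z_nonneg: "0 \<le> Z n z" unfolding Z_def by (intro sum_nonneg) (simp add: Fd_01)

lemma E_eq: "E_set X T S n r = {z \<in> space (M \<Otimes>\<^sub>M N). 0 < Z n z}"
proof -
  have "0 < Z n (x, y) \<longleftrightarrow> (\<exists>i<n. \<exists>j<n. \<bar>(T^^i) x - (S^^j) y\<bar> < r)" for x y
  proof
    assume "\<exists>i<n. \<exists>j<n. \<bar>(T^^i) x - (S^^j) y\<bar> < r"
    then obtain i j where ij: "i < n" "j < n" "\<bar>(T^^i) x - (S^^j) y\<bar> < r" by auto
    have "0 < (\<Sum>j<n. Fd T S r i j (x, y))"
      using ij by (rule_tac sum_pos2[where i=j]) (auto simp: Fd_01 Fd_pos)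
    hence "0 < (\<Sum>i<n. \<Sum>j<n. Fd T S r i j (x, y))"
      using ij by (rule_tac sum_pos2[where i=i]) (auto intro!: sum_nonneg simp: Fd_01)
    thus "0 < Z n (x, y)" unfolding Z_def .
  next
    assume pos: "0 < Z n (x, y)"
    show "\<exists>i<n. \<exists>j<n. \<bar>(T^^i) x - (S^^j) y\<bar> < r"
    proof (rule ccontr)
      assume "\<not> ?thesis"
      hence "Fd T S r i j (x, y) = 0" if "i < n" "j < n" for i j
        using that Fd_pos[of i j x y] Fd_01[of T S r i j "(x,y)"] by auto
      hence "Z n (x, y) = 0" unfolding Z_def by simp
      thus False using pos by simp
    qed
  qed
  thus ?thesis unfolding E_set_def space_pair_measure spX by auto
qed

lemma E_sets: "E_set X T S n r \<in> sets (M \<Otimes>\<^sub>M N)"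
proof -
  note Z_meas[measurable]
  have "{z \<in> space (M \<Otimes>\<^sub>M N). 0 < Z n z} \<in> sets (M \<Otimes>\<^sub>M N)" by measurable
  thus ?thesis using E_eq by simp
qed

lemma intZ: "integrable (M \<Otimes>\<^sub>M N) (Z n)"
  unfolding Z_def by (auto intro!: integrable_sum intF)

lemma intZ2: "integrable (M \<Otimes>\<^sub>M N) (\<lambda>z. Z n z * Z n z)"
  unfolding Z_sq by (simp add: integrable_sum intG)

lemma prob_bound:
  assumes m: "0 < (\<integral>y. pM y \<partial>N)" and n: "0 < n"
  shows "1 - measure (M \<Otimes>\<^sub>M N) (E_set X T S n r)
     \<le> (integral\<^sup>L (M \<Otimes>\<^sub>M N) (\<lambda>z. Z n z * Z n z) - (real n ^ 2 * (\<integral>y. pM y \<partial>N))^2) / (real n ^ 2 * (\<integral>y. pM y \<partial>N))^2"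
proof -
  interpret pair_prob_space M N by (rule PP)
  define a where "a = real n ^ 2 * (\<integral>y. pM y \<partial>N)"
  have a0: "0 < a" unfolding a_def using m n by simp
  let ?E = "E_set X T S n r"
  let ?P = "M \<Otimes>\<^sub>M N"
  have "1 - measure ?P ?E = measure ?P (space ?P - ?E)"
    using prob_compl[OF E_sets] by simp
  also have "\<dots> = integral\<^sup>L ?P (indicator (space ?P - ?E))" by (simp add: Int_absorb2)
  also have "\<dots> \<le> integral\<^sup>L ?P (\<lambda>z. Z n z * Z n z / a^2 - 2 * Z n z / a + 1)"
  proof (rule integral_mono)
    show "integrable ?P (indicator (space ?P - ?E) :: _ \<Rightarrow> real)"
    proof (rule bint[where B=1])
      show "prob_space ?P" by (rule prob_space_pair[OF PM PN])
      show "indicator (space ?P - ?E) \<in> borel_measurable ?P"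
        using E_sets by (intro borel_measurable_indicator) auto
    qed (auto simp: indicator_def)
    show "integrable ?P (\<lambda>z. Z n z * Z n z / a^2 - 2 * Z n z / a + 1)"
      using intZ intZ2 by auto
    fix z assume z: "z \<in> space ?P"
    have eq: "Z n z * Z n z / a^2 - 2 * Z n z / a + 1 = ((Z n z - a) / a)^2"
      using a0 by (simp add: field_simps power2_eq_square)
    show "indicator (space ?P - ?E) z \<le> Z n z * Z n z / a^2 - 2 * Z n z / a + 1"
    proof (cases "z \<in> ?E")
      case True thus ?thesis unfolding eq by simp
    next
      case False
      hence "Z n z = 0" using z Z_nonneg[of n z] unfolding E_eq by auto
      thus ?thesis using False z a0 by simp
    qed
  qed
  also have "\<dots> = integral\<^sup>L ?P (\<lambda>z. Z n z * Z n z) / a^2 - 2 * integral\<^sup>L ?P (Z n) / a + 1"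
  proof -
    have ps: "measure ?P (space ?P) = 1" using prob_space_pair[OF PM PN] by (simp add: prob_space.prob_space)
    show ?thesis using intZ intZ2 ps by (simp add: integral_diff integral_add)
  qed
  also have "\<dots> = (integral\<^sup>L ?P (\<lambda>z. Z n z * Z n z) - a^2) / a^2"
    using a0 unfolding EZ a_def[symmetric] by (simp add: field_simps power2_eq_square)
  finally show ?thesis unfolding a_def .
qed

end



context two begin

lemma final_bound:
  fixes L n :: nat
  defines "m \<equiv> (\<integral>y. pM y \<partial>N)"
  assumes n: "0 < n" and m: "0 < m"
  shows "1 - measure (M \<Otimes>\<^sub>M N) (E_set X T S n r)
    \<le> 2 * (C * exp (- \<theta> * real L)) / m^2
      + 4 * real L * (sqrt (\<integral>y. pM y \<partial>M) + sqrt (\<integral>y. measure N (ball y r \<inter> space N) \<partial>N)) / (real n * m)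
      + 4 * real L ^ 2 / (real n ^ 2 * m)"
proof -
  define A where "A = 2 * sqrt (\<integral>y. measure N (ball y r \<inter> space N) \<partial>N) * m"
  define B where "B = 2 * sqrt (\<integral>y. pM y \<partial>M) * m"
  define e where "e = C * exp (- \<theta> * real L)"
  define a where "a = real n ^ 2 * m"
  have a0: "0 < a" unfolding a_def using n m by simp
  have "1 - measure (M \<Otimes>\<^sub>M N) (E_set X T S n r)
     \<le> (integral\<^sup>L (M \<Otimes>\<^sub>M N) (\<lambda>z. Z n z * Z n z) - a^2) / a^2"
    using prob_bound[OF m[unfolded m_def] n] unfolding a_def m_def .
  also have "\<dots> \<le> (real n ^ 4 * (m^2 + 2 * e) + real n ^ 3 * (2 * real L) * (A + B) + (real n * (2 * real L))^2 * m - a^2) / a^2"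
    using EZ2_bound[of n L] a0 unfolding A_def B_def e_def m_def
    by (intro divide_right_mono diff_right_mono) auto
  also have "\<dots> = 2 * e / m^2 + 4 * real L * (sqrt (\<integral>y. pM y \<partial>M) + sqrt (\<integral>y. measure N (ball y r \<inter> space N) \<partial>N)) / (real n * m)
      + 4 * real L ^ 2 / (real n ^ 2 * m)"
    using n m unfolding a_def A_def B_def by (simp add: field_simps power2_eq_square power3_eq_cube power4_eq_xxxx)
  finally show ?thesis unfolding e_def .
qed

end



lemma est:
  fixes nn l H mm c1 c2 Lr C e \<kappa> :: real
  assumes l: "1 \<le> l" and H: "1 \<le> H" and nn: "0 < nn"
    and mm: "l^2 * H / nn^2 \<le> mm"
    and r1: "sqrt c1 / mm \<le> nn / (l * H)" and r2: "sqrt c2 / mm \<le> nn / (l * H)"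
    and L0: "0 \<le> Lr" and L1: "Lr \<le> \<kappa> * l" and e0: "0 \<le> e" and e1: "e \<le> C / nn^4" and c0: "0 \<le> c1" "0 \<le> c2"
  shows "2 * e / mm^2 + 4 * Lr * (sqrt c1 + sqrt c2) / (nn * mm) + 4 * Lr^2 / (nn^2 * mm)
      \<le> (2 * C + 8 * \<kappa> + 4 * \<kappa>^2) / H"
proof -
  have "0 \<le> \<kappa> * l" using L0 L1 by linarith
  hence k0: "0 \<le> \<kappa>" using l by (auto simp: zero_le_mult_iff)
  have lH: "0 < l * H" using l H by simp
  have HH: "H / nn^2 \<le> l^2 * H / nn^2" using l H nn
    by (intro divide_right_mono) (auto simp: power_one_right intro: order_trans[OF _ power_increasing[of 1 2 l]])
  have mm_ge: "H / nn^2 \<le> mm" using HH mm by linarith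
  have "0 < H / nn^2" using H nn by simp
  hence mm0: "0 < mm" using mm_ge by linarith
  have "0 \<le> C / nn^4" using e0 e1 by linarith
  hence C0: "0 \<le> C" using nn by (simp add: zero_le_divide_iff)
  have t1: "2 * e / mm^2 \<le> 2 * C / H"
  proof -
    have "(H / nn^2)^2 \<le> mm^2" using mm_ge H nn by (intro power_mono) auto
    hence a: "H^2 / nn^4 \<le> mm^2" by (simp add: power_divide power_mult[symmetric])
    have "2 * e / mm^2 \<le> 2 * (C / nn^4) / (H^2 / nn^4)"
      using e0 e1 a mm0 H nn by (intro frac_le) auto
    also have "\<dots> = 2 * C / H^2" using nn by (simp add: field_simps)
    also have "\<dots> \<le> 2 * C / H" using C0 H by (intro divide_left_mono) (auto simp: power2_eq_square)
    finally show ?thesis .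
  qed
  have t2: "4 * Lr * (sqrt c1 + sqrt c2) / (nn * mm) \<le> 8 * \<kappa> / H"
  proof -
    have "4 * Lr * (sqrt c1 + sqrt c2) / (nn * mm) = (4 * Lr / nn) * (sqrt c1 / mm + sqrt c2 / mm)"
      using nn mm0 by (simp add: field_simps)
    also have "\<dots> \<le> (4 * (\<kappa> * l) / nn) * (nn / (l * H) + nn / (l * H))"
      using L0 L1 r1 r2 nn c0 mm0 by (intro mult_mono add_mono divide_right_mono) auto
    also have "\<dots> = 8 * \<kappa> / H" using nn l H by (simp add: field_simps)
    finally show ?thesis .
  qed
  have t3: "4 * Lr^2 / (nn^2 * mm) \<le> 4 * \<kappa>^2 / H"
  proof -
    have "Lr^2 \<le> (\<kappa> * l)^2" using L0 L1 by (intro power_mono) auto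
    have "4 * Lr^2 / (nn^2 * mm) \<le> 4 * (\<kappa> * l)^2 / (nn^2 * (l^2 * H / nn^2))"
      using \<open>Lr^2 \<le> (\<kappa> * l)^2\<close> mm nn l H by (intro frac_le mult_left_mono) auto
    also have "\<dots> = 4 * \<kappa>^2 / H" using nn l H by (simp add: field_simps power2_eq_square)
    finally show ?thesis .
  qed
  have "(2 * C + 8 * \<kappa> + 4 * \<kappa>^2) / H = 2 * C / H + 8 * \<kappa> / H + 4 * \<kappa>^2 / H" by (simp add: add_divide_distrib)
  thus ?thesis using t1 t2 t3 by linarith
qed



theorem mainTheorem4:
  fixes X :: "real set" and M1 M2 :: "real measure" and T1 T2 :: "real \<Rightarrow> real"
    and r :: "nat \<Rightarrow> real" and h :: "nat \<Rightarrow> real"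
  assumes sp1: "space M1 = X" and sets1: "sets M1 = sets (restrict_space borel X)"
    and sp2: "space M2 = X" and sets2: "sets M2 = sets (restrict_space borel X)"
    and P1: "prob_space M1" and P2: "prob_space M2"
    and T1m: "T1 \<in> measurable M1 M1" and T1p: "distr M1 M1 T1 = M1"
    and T2m: "T2 \<in> measurable M2 M2" and T2p: "distr M2 M2 T2 = M2"
    and mix1: "exp_mixing_BV_Linf M1 T1" and mix2: "exp_mixing_BV_Linf M2 T2"
    and rpos: "\<And>n. r n > 0"
    and hpos: "\<And>n. h n > 0" and hlim: "filterlim h at_top sequentially"
    and lower: "\<forall>\<^sub>F n in sequentially.
        (\<integral>y. measure M1 (ball y (r n) \<inter> X) \<partial>M2) \<ge> (ln (real n))\<^sup>2 * h n / (real n)\<^sup>2"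
    and ratio1: "\<forall>\<^sub>F n in sequentially.
        sqrt (\<integral>y. measure M1 (ball y (r n) \<inter> X) \<partial>M1) / (\<integral>y. measure M1 (ball y (r n) \<inter> X) \<partial>M2)
          \<le> real n / (ln (real n) * h n)"
    and ratio2: "\<forall>\<^sub>F n in sequentially.
        sqrt (\<integral>y. measure M2 (ball y (r n) \<inter> X) \<partial>M2) / (\<integral>y. measure M1 (ball y (r n) \<inter> X) \<partial>M2)
          \<le> real n / (ln (real n) * h n)"
  shows "measure (M1 \<Otimes>\<^sub>M M2) (\<Inter>N. \<Union>n\<in>{N..}. E_set X T1 T2 n (r n)) = 1"
proof -
  have s1: "sys M1 T1 X" unfolding sys_def using sp1 sets1 P1 T1m T1p by auto
  have s2: "sys M2 T2 X" unfolding sys_def using sp2 sets2 P2 T2m T2p by auto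
  obtain C1 \<theta>1 where g1: "good M1 T1 X C1 \<theta>1" using mixing_good[OF s1 mix1] by blast
  obtain C2 \<theta>2 where g2: "good M2 T2 X C2 \<theta>2" using mixing_good[OF s2 mix2] by blast
  define C where "C = max C1 C2"
  define \<theta> where "\<theta> = min \<theta>1 \<theta>2"
  have pos: "C1 > 0" "\<theta>1 > 0" "C2 > 0" "\<theta>2 > 0" using g1 g2 unfolding good_def by auto
  have Cpos: "C > 0" "\<theta> > 0" using pos unfolding C_def \<theta>_def by auto
  have G1: "good M1 T1 X C \<theta>" by (rule good_mono[OF g1]) (use pos in \<open>auto simp: C_def \<theta>_def\<close>)
  have G2: "good M2 T2 X C \<theta>" by (rule good_mono[OF g2]) (use pos in \<open>auto simp: C_def \<theta>_def\<close>)
  have tw: "two M1 M2 T1 T2 X C \<theta> (r n)" for n using G1 G2 rpos by (simp add: two_def)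
  let ?P = "M1 \<Otimes>\<^sub>M M2"
  interpret PP: pair_prob_space M1 M2 by (rule two.PP[OF tw[of 0]])
  define E where "E n = E_set X T1 T2 n (r n)" for n
  have Esets: "E n \<in> sets ?P" for n unfolding E_def by (rule two.E_sets[OF tw])
  have Esub: "E n \<subseteq> space ?P" for n using Esets by (rule sets.sets_into_space)
  define \<kappa> where "\<kappa> = 4 / \<theta> + 1"
  have k0: "0 \<le> \<kappa>" using Cpos unfolding \<kappa>_def by simp
  define K where "K = 2 * C + 8 * \<kappa> + 4 * \<kappa>^2"
  have K0: "0 < K" using Cpos k0 unfolding K_def by (simp add: add_pos_nonneg)
  define Lf where "Lf n = nat \<lceil>4 * ln (real n) / \<theta>\<rceil>" for n :: nat
  have main_ev: "\<forall>\<^sub>F n in sequentially. 1 - measure ?P (E n) \<le> \<epsilon>" if \<epsilon>: "\<epsilon> > 0" for \<epsilon>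
  proof -
    have hB: "\<forall>\<^sub>F n in sequentially. max 1 (K / \<epsilon>) \<le> h n" using hlim unfolding filterlim_at_top by blast
    have n3: "\<forall>\<^sub>F n in sequentially. 3 \<le> n" by (rule eventually_ge_at_top)
    show ?thesis using hB n3 lower ratio1 ratio2
    proof eventually_elim
      case (elim n)
      let ?m = "\<integral>y. measure M1 (ball y (r n) \<inter> X) \<partial>M2"
      let ?c1 = "\<integral>y. measure M1 (ball y (r n) \<inter> X) \<partial>M1"
      let ?c2 = "\<integral>y. measure M2 (ball y (r n) \<inter> X) \<partial>M2"
      define l where "l = ln (real n)"
      have nn: "0 < real n" "3 \<le> real n" using elim by auto
      have l1: "1 \<le> l" unfolding l_def using nn exp_le by (subst ln_ge_iff) auto
      have H1: "1 \<le> h n" and HK: "K / \<epsilon> \<le> h n" using elim by auto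
      have mm: "l^2 * h n / (real n)^2 \<le> ?m" using elim unfolding l_def by simp
      have "0 < l^2 * h n / (real n)^2" using l1 H1 nn by simp
      hence m0: "0 < ?m" using mm by linarith
      have fb: "1 - measure ?P (E n)
         \<le> 2 * (C * exp (- \<theta> * real (Lf n))) / ?m^2
          + 4 * real (Lf n) * (sqrt ?c1 + sqrt ?c2) / (real n * ?m)
          + 4 * real (Lf n) ^ 2 / (real n ^ 2 * ?m)"
        using two.final_bound[OF tw[of n], where L="Lf n" and n=n] m0 nn unfolding sp1 sp2 E_def by simp
      have Lge: "4 * l / \<theta> \<le> real (Lf n)" unfolding Lf_def l_def by linarith
      have Lle: "real (Lf n) \<le> \<kappa> * l"
      proof -
        have "0 \<le> 4 * l / \<theta>" using l1 Cpos by simp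
        hence "real (Lf n) \<le> 4 * l / \<theta> + 1" unfolding Lf_def l_def by linarith
        also have "\<dots> \<le> 4 * l / \<theta> + l" using l1 by simp
        also have "\<dots> = \<kappa> * l" unfolding \<kappa>_def by (simp add: field_simps)
        finally show ?thesis .
      qed
      have e1: "C * exp (- \<theta> * real (Lf n)) \<le> C / (real n)^4"
      proof -
        have "\<theta> * (4 * l / \<theta>) \<le> \<theta> * real (Lf n)" using Lge Cpos by (intro mult_left_mono) auto
        hence "4 * l \<le> \<theta> * real (Lf n)" using Cpos by simp
        hence "exp (- \<theta> * real (Lf n)) \<le> exp (- (4 * l))" by simp
        also have "exp (- (4 * l)) = 1 / (real n)^4"
        proof -
          have "ln ((real n)^4) = 4 * l" unfolding l_def by (simp add: ln_realpow)
          hence "exp (4 * l) = (real n)^4" using nn by (metis exp_ln zero_less_power)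
          thus ?thesis by (simp add: exp_minus field_simps)
        qed
        finally show ?thesis using Cpos by (simp add: divide_inverse mult_left_mono)
      qed
      have c0: "0 \<le> ?c1" "0 \<le> ?c2" by (auto intro!: integral_nonneg_AE)
      have r1: "sqrt ?c1 / ?m \<le> real n / (l * h n)" using elim unfolding l_def by simp
      have r2: "sqrt ?c2 / ?m \<le> real n / (l * h n)" using elim unfolding l_def by simp
      have L0: "0 \<le> real (Lf n)" by simp
      have e0: "0 \<le> C * exp (- \<theta> * real (Lf n))" using Cpos by simp
      have "1 - measure ?P (E n) \<le> K / h n"
        using fb est[OF l1 H1 nn(1) mm r1 r2 L0 Lle e0 e1 c0] unfolding K_def by linarith
      also have "\<dots> \<le> \<epsilon>" using HK \<epsilon> H1 K0 by (simp add: divide_le_eq mult.commute pos_divide_le_eq)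
      finally show ?case .
    qed
  qed
  have null: "space ?P - (\<Union>n\<in>{N..}. E n) \<in> null_sets ?P" for N
  proof -
    let ?A = "space ?P - (\<Union>n\<in>{N..}. E n)"
    have As: "?A \<in> sets ?P" using Esets by auto
    have "measure ?P ?A \<le> 0 + \<epsilon>" if eps: "\<epsilon> > 0" for \<epsilon>
    proof -
      obtain N0 where N0: "\<And>n. n \<ge> N0 \<Longrightarrow> 1 - measure ?P (E n) \<le> \<epsilon>"
        using main_ev[OF eps] unfolding eventually_sequentially by blast
      let ?n = "max N N0"
      have "?A \<subseteq> space ?P - E ?n" by auto
      hence "measure ?P ?A \<le> measure ?P (space ?P - E ?n)"
        using Esets by (intro PP.finite_measure_mono) auto
      also have "\<dots> = 1 - measure ?P (E ?n)" using PP.prob_compl[OF Esets] by simp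
      also have "\<dots> \<le> \<epsilon>" using N0[of ?n] by simp
      finally show ?thesis by simp
    qed
    hence "measure ?P ?A \<le> 0" by (rule field_le_epsilon)
    hence "measure ?P ?A = 0" using measure_nonneg[of ?P ?A] by linarith
    hence "emeasure ?P ?A = 0" using PP.emeasure_eq_measure by simp
    thus ?thesis using As by auto
  qed
  have U: "(\<Union>N. space ?P - (\<Union>n\<in>{N..}. E n)) \<in> null_sets ?P" using null by (rule null_sets_UN)
  have eq: "space ?P - (\<Inter>N. \<Union>n\<in>{N..}. E n) = (\<Union>N. space ?P - (\<Union>n\<in>{N..}. E n))" by auto
  have Is: "(\<Inter>N. \<Union>n\<in>{N..}. E n) \<in> sets ?P" using Esets by auto
  have "measure ?P (space ?P - (\<Inter>N. \<Union>n\<in>{N..}. E n)) = 0"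
    unfolding eq using U by (simp add: measure_def null_setsD1)
  hence "measure ?P (\<Inter>N. \<Union>n\<in>{N..}. E n) = 1" using PP.prob_compl[OF Is] by simp
  thus ?thesis unfolding E_def .
qed


end
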